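(* Let $\bm v_1,\dots,\bm v_N\in\mathbb{R}^r$, $\bm X := \mathsf{Gram}(\bm v_1,\dots,\bm v_N)$, and $\bm v := (\bm v_1;\dots;\bm v_N)\in\mathbb{R}^{rN}$. Then $\bm X\in\mathscr{C}^N$ if and only if $\sum_{i=1}^N\|\bm v_i\|_2^2 = N$ and there exists $\bm M\in\mathcal{B}_{\mathrm{sep}}(N,r)$ with $\bm v^\top\bm M\bm v = N^2$.
   Context: $\mathscr{C}^N := \mathrm{conv}\{\bm x\bm x^\top : \bm x\in\{\pm1\}^N\}$. A matrix $\bm M \in \mathbb{R}^{rN\times rN}$ is viewed as an $N\times N$ array of $r\times r$ blocks, $\bm M_{[ij]}$ denoting block $(i,j)$. $\mathcal{B}(N,r)$ is the set of symmetric $\bm M \in \mathbb{R}^{rN\times rN}$ with $\bm M \succeq 0$, $\bm M_{[ii]} = \bm I_r$ for all $i$, and $\bm M_{[ij]} = \bm M_{[ij]}^\top$ for all $i,j$. A matrix $\bm\rho\in\mathbb{R}^{rN\times rN}$ with trace $1$ is separable if $\bm\rho = \sum_{k=1}^m \rho_k(\bm a_k\otimes\bm b_k)(\bm a_k\otimes\bm b_k)^\top$ for some unit vectors $\bm a_k\in\mathbb{R}^N$, unit vectors $\bm b_k\in\mathbb{R}^r$, and $\rho_k\ge0$ with $\sum_k\rho_k = 1$ (here $\bm a\otimes\bm b\in\mathbb{R}^{rN}$ has $i$-th block $a_i\bm b$). $\mathcal{B}_{\mathrm{sep}}(N,r)$ is the set of $\bm M\in\mathcal{B}(N,r)$ such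 that $\frac{1}{rN}\bm M$ is separable. *)

theory Defs
  imports "HOL-Analysis.Analysis"
begin

text \<open>Index conventions: the index set [N] is a finite type 'n (N = CARD('n)),
  the index set [r] is a finite type 'r (r = CARD('r)); R^{rN} is indexed by
  pairs (i,a) :: 'n \<times> 'r, so that entry ((i,a),(j,b)) of an rN x rN matrix
  is entry (a,b) of its block (i,j).\<close>

definition outer :: "real^'k \<Rightarrow> real^'k^'k" where
  "outer x = (\<chi> i j. x$i * x$j)"

definition gram :: "('n \<Rightarrow> real^'r) \<Rightarrow> real^'n^'n" where
  "gram v = (\<chi> i j. v i \<bullet> v j)"

definition stack :: "('n::finite \<Rightarrow> real^'r::finite) \<Rightarrow> real^('n \<times> 'r)" where
  "stack v = (\<chi> p. v (fst p) $ snd p)"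

definition cut_polytope :: "(real^'n^'n) set" where
  "cut_polytope = convex hull {outer x | x :: real^'n. \<forall>i. x$i = 1 \<or> x$i = -1}"

definition psd :: "real^'k^'k \<Rightarrow> bool" where
  "psd M \<longleftrightarrow> (\<forall>x. 0 \<le> x \<bullet> (M *v x))"

definition block :: "real^('n::finite \<times> 'r::finite)^('n \<times> 'r) \<Rightarrow> 'n \<Rightarrow> 'n \<Rightarrow> real^'r^'r" where
  "block M i j = (\<chi> a b. M $ (i,a) $ (j,b))"

definition B_set :: "(real^('n::finite \<times> 'r::finite)^('n \<times> 'r)) set" where
  "B_set = {M. transpose M = M \<and> psd M \<and> (\<forall>i. block M i i = mat 1)
              \<and> (\<forall>i j. block M i j = transpose (block M i j))}"

definition kron :: "real^'n::finite \<Rightarrow> real^'r::finite \<Rightarrow> real^('n \<times> 'r)" where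
  "kron a b = (\<chi> p. a $ fst p * b $ snd p)"

definition separable :: "real^('n::finite \<times> 'r::finite)^('n \<times> 'r) \<Rightarrow> bool" where
  "separable \<rho> \<longleftrightarrow> trace \<rho> = 1 \<and>
     (\<exists>(m::nat) (c::nat \<Rightarrow> real) (a::nat \<Rightarrow> real^'n) (b::nat \<Rightarrow> real^'r).
        (\<forall>k<m. norm (a k) = 1 \<and> norm (b k) = 1 \<and> 0 \<le> c k) \<and>
        (\<Sum>k<m. c k) = 1 \<and>
        \<rho> = (\<Sum>k<m. c k *\<^sub>R outer (kron (a k) (b k))))"

definition B_sep :: "(real^('n::finite \<times> 'r::finite)^('n \<times> 'r)) set" where
  "B_sep = {M \<in> B_set. separable ((1 / (real CARD('r) * real CARD('n))) *\<^sub>R M)}"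

end

theory Submission
  imports Defs
begin


lemma outer_sum_entry:
  "(\<Sum>k\<in>K. d k *\<^sub>R outer (w k)) $ p $ q = (\<Sum>k\<in>K. d k * (w k $ p * w k $ q))"
  by (simp add: outer_def)

lemma sum_swap3: "(\<Sum>p\<in>A. \<Sum>q\<in>B. \<Sum>k\<in>K. f p q k) = (\<Sum>k\<in>K. \<Sum>p\<in>A. \<Sum>q\<in>B. f p q k)"
proof -
  have "(\<Sum>p\<in>A. \<Sum>q\<in>B. \<Sum>k\<in>K. f p q k) = (\<Sum>p\<in>A. \<Sum>k\<in>K. \<Sum>q\<in>B. f p q k)"
    by (rule sum.cong[OF refl], rule sum.swap)
  also have "\<dots> = (\<Sum>k\<in>K. \<Sum>p\<in>A. \<Sum>q\<in>B. f p q k)" by (rule sum.swap)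
  finally show ?thesis .
qed

lemma bil_outer_sum:
  fixes w :: "'k \<Rightarrow> real^'m"
  shows "x \<bullet> ((\<Sum>k\<in>K. d k *\<^sub>R outer (w k)) *v y) = (\<Sum>k\<in>K. d k * ((w k \<bullet> x) * (w k \<bullet> y)))"
proof -
  have "x \<bullet> ((\<Sum>k\<in>K. d k *\<^sub>R outer (w k)) *v y) = (\<Sum>p\<in>UNIV. \<Sum>q\<in>UNIV. \<Sum>k\<in>K. d k * ((w k $ p * x $ p) * (w k $ q * y $ q)))"
    unfolding inner_vec_def matrix_vector_mult_def
    apply (simp add: outer_def sum_distrib_left sum_distrib_right)
    apply (rule sum.cong[OF refl])+
    by (simp add: mult_ac)
  also have "\<dots> = (\<Sum>k\<in>K. \<Sum>p\<in>UNIV. \<Sum>q\<in>UNIV. d k * ((w k $ p * x $ p) * (w k $ q * y $ q)))"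
    by (rule sum_swap3)
  also have "\<dots> = (\<Sum>k\<in>K. d k * ((w k \<bullet> x) * (w k \<bullet> y)))"
    by (rule sum.cong[OF refl]) (simp only: inner_vec_def inner_real_def, simp only: sum_product, simp only: sum_distrib_left)
  finally show ?thesis .
qed

lemma quad_outer_sum:
  fixes w :: "'k \<Rightarrow> real^'m"
  shows "x \<bullet> ((\<Sum>k\<in>K. d k *\<^sub>R outer (w k)) *v x) = (\<Sum>k\<in>K. d k * (w k \<bullet> x)^2)"
  unfolding bil_outer_sum power2_eq_square ..

lemma sum_pair_univ: "(\<Sum>p\<in>(UNIV::('a::finite\<times>'b::finite) set). f p) = (\<Sum>i\<in>UNIV. \<Sum>a\<in>UNIV. f (i,a))"
  unfolding sum.cartesian_product UNIV_Times_UNIV by simp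

lemma kron_stack: "kron a b \<bullet> stack v = (\<Sum>i\<in>UNIV. a $ i * (b \<bullet> v i))"
  unfolding inner_vec_def sum_pair_univ
  by (rule sum.cong[OF refl]) (simp add: kron_def stack_def sum_distrib_left mult.assoc)

lemma block_outer_sum:
  "block (\<Sum>k\<in>K. d k *\<^sub>R outer (kron (a k) (b k))) i j = (\<Sum>k\<in>K. (d k * (a k $ i * a k $ j)) *\<^sub>R outer (b k))"
  unfolding vec_eq_iff block_def outer_def kron_def
  by (auto intro!: sum.cong simp: mult_ac)

lemma diag_form:
  assumes "block M i i = mat 1" "M = (\<Sum>k\<in>K. d k *\<^sub>R outer (kron (a k) (b k)))"
  shows "(\<Sum>k\<in>K. d k * ((a k $ i)^2 * ((b k \<bullet> u) * (b k \<bullet> w)))) = u \<bullet> w"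
proof -
  have "u \<bullet> w = u \<bullet> (block M i i *v w)" using assms(1) by simp
  also have "\<dots> = (\<Sum>k\<in>K. d k * ((a k $ i)^2 * ((b k \<bullet> u) * (b k \<bullet> w))))"
    unfolding assms(2) block_outer_sum bil_outer_sum by (rule sum.cong[OF refl]) (simp add: power2_eq_square mult_ac)
  finally show ?thesis by simp
qed



lemma sign_arith:
  fixes d t ai aj xi xj :: real
  assumes "d \<ge> 0" "d * (ai * xi - t) = 0" "d * (aj * xj - t) = 0" "d * (ai * xj - aj * xi) = 0"
  shows "d * t * (ai * xj) = d * t^2 * ((if xi \<ge> 0 then 1 else -1) * (if xj \<ge> 0 then 1 else -1))"
proof (cases "d = 0 \<or> t = 0")
  case True
  then show ?thesis using assms by auto
next
  case False
  then have h1: "ai * xi = t" "aj * xj = t" "ai * xj = aj * xi" "t \<noteq> 0" using assms by auto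
  let ?p = "ai * xj"
  have pp: "?p * ?p = t * t" using h1 by (metis mult.assoc mult.commute)
  have tp: "t * ?p = ai * ai * (xi * xj)" using h1 by (metis mult.assoc mult.commute)
  have ai0: "ai \<noteq> 0" using h1 by auto
  have aa: "ai * ai > 0" using ai0 by (metis not_real_square_gt_zero)
  have xi0: "xi \<noteq> 0" using h1 by auto
  have xj0: "xj \<noteq> 0" using h1 by auto
  have pm: "?p = t \<or> ?p = - t" using pp
    by (metis minus_mult_minus square_eq_iff)
  show ?thesis
  proof (cases "xi * xj > 0")
    case True
    then have "t * ?p > 0" using tp aa by (metis mult_pos_pos)
    then have "?p = t" using pm h1(4) by (auto simp: mult_less_0_iff)
    moreover have "(if xi \<ge> 0 then 1 else -1) * (if xj \<ge> 0 then 1 else -1) = (1::real)"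
      using True xi0 xj0 by (auto simp: zero_less_mult_iff)
    ultimately show ?thesis by (simp add: power2_eq_square)
  next
    case False
    then have "xi * xj < 0" using xi0 xj0 by (simp add: not_less order_le_less)
    then have "t * ?p < 0" using tp aa by (metis mult_pos_neg)
    then have "?p = - t" using pm h1(4) by (auto simp: zero_less_mult_iff)
    moreover have "(if xi \<ge> 0 then 1 else -1) * (if xj \<ge> 0 then 1 else -1) = (-1::real)"
      using \<open>xi * xj < 0\<close> xi0 xj0 by (auto simp: mult_less_0_iff)
    ultimately show ?thesis by (simp add: power2_eq_square)
  qed
qed


lemma ortho_expand:
  fixes z :: "'a::euclidean_space"
  assumes fin: "finite B" and orth: "pairwise orthogonal B" and n1: "\<And>e. e \<in> B \<Longrightarrow> norm e = 1"
    and z: "z \<in> span B"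
  shows "z = (\<Sum>e\<in>B. (e \<bullet> z) *\<^sub>R e)"
proof -
  obtain c where zc: "z = (\<Sum>b\<in>B. c b *\<^sub>R b)" using z span_finite[OF fin] by auto
  have *: "\<forall>x\<in>B. \<forall>y\<in>B. x \<bullet> y = (if x=y then 1 else 0)"
    using orth n1 norm_eq_1 by (auto simp: orthogonal_def pairwise_def)
  have "e \<bullet> z = c e" if "e \<in> B" for e
  proof -
    have "e \<bullet> z = (\<Sum>b\<in>B. c b * (e \<bullet> b))" by (simp add: zc inner_sum_right)
    also have "\<dots> = (\<Sum>b\<in>B. if b = e then c b else 0)"
      by (rule sum.cong[OF refl]) (use * that in auto)
    also have "\<dots> = c e" using fin that by simp
    finally show ?thesis .
  qed
  then show ?thesis unfolding zc by (intro sum.cong) auto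
qed

lemma rep_exists:
  fixes T :: "'a::euclidean_space \<Rightarrow> 'b::euclidean_space"
  assumes lin: "linear T" and ker: "\<And>g. T g = 0 \<Longrightarrow> p \<bullet> g = 0"
  shows "\<exists>q \<in> range T. \<forall>g. T g \<bullet> q = p \<bullet> g"
proof -
  have "p \<in> (T -` {0})\<^sup>\<bottom>"
    using ker by (auto simp: orthogonal_comp_def orthogonal_def inner_commute)
  also have "(T -` {0})\<^sup>\<bottom> = range (adjoint T)"
    unfolding ker_orthogonal_comp_adjoint[OF lin]
    by (rule orthogonal_comp_self) (simp add: adjoint_linear[OF lin] linear_subspace_image)
  finally obtain q0 where q0: "p = adjoint T q0" by auto
  have sub: "subspace (range T)" by (simp add: lin linear_subspace_image)
  obtain y z where yz: "q0 = y + z" "y \<in> range T" "z \<in> (range T)\<^sup>\<bottom>"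
    using subspace_sum_orthogonal_comp[OF sub] set_plus_elim
    by (metis UNIV_I)
  have "T g \<bullet> y = p \<bullet> g" for g
  proof -
    have "T g \<bullet> z = 0" using yz(3) by (auto simp: orthogonal_comp_def orthogonal_def)
    then have "T g \<bullet> y = T g \<bullet> q0" by (simp add: yz(1) inner_add_right)
    also have "\<dots> = g \<bullet> p" by (simp add: q0 adjoint_works[OF lin])
    finally show ?thesis by (simp add: inner_commute)
  qed
  then show ?thesis using yz(2) by blast
qed

lemma trace_outer_sum:
  "trace (\<Sum>k\<in>K. c k *\<^sub>R outer (w k)) = (\<Sum>k\<in>K. c k * (w k \<bullet> w k))"
  unfolding trace_def outer_sum_entry inner_vec_def
  by (subst sum.swap) (simp add: sum_distrib_left)

lemma kron_self: "kron a b \<bullet> kron a b = (a \<bullet> a) * (b \<bullet> b)"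
  unfolding inner_vec_def sum_pair_univ
  by (simp add: kron_def sum_product mult_ac)

lemma sep_family:
  fixes a :: "'k \<Rightarrow> real^'n::finite" and b :: "'k \<Rightarrow> real^'r::finite"
  assumes fin: "finite K" and nab: "\<And>k. k \<in> K \<Longrightarrow> norm (a k) = 1 \<and> norm (b k) = 1 \<and> 0 \<le> c k"
    and c1: "sum c K = 1"
  shows "separable (\<Sum>k\<in>K. c k *\<^sub>R outer (kron (a k) (b k)))"
proof -
  have tr: "trace (\<Sum>k\<in>K. c k *\<^sub>R outer (kron (a k) (b k))) = 1"
    unfolding trace_outer_sum kron_self using c1 nab by (simp add: norm_eq_1)
  obtain h where h: "bij_betw h {0..<card K} K" using ex_bij_betw_nat_finite[OF fin] by blast
  have hK: "\<And>k. k < card K \<Longrightarrow> h k \<in> K" using h by (auto simp: bij_betw_def)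
  have "(\<Sum>k<card K. c (h k)) = 1"
    using sum.reindex_bij_betw[OF h, of c] c1 by (simp add: atLeast0LessThan)
  moreover have "(\<Sum>k\<in>K. c k *\<^sub>R outer (kron (a k) (b k))) = (\<Sum>k<card K. c (h k) *\<^sub>R outer (kron (a (h k)) (b (h k))))"
    using sum.reindex_bij_betw[OF h, of "\<lambda>k. c k *\<^sub>R outer (kron (a k) (b k))"] by (simp add: atLeast0LessThan)
  moreover have "\<forall>k<card K. norm (a (h k)) = 1 \<and> norm (b (h k)) = 1 \<and> 0 \<le> c (h k)"
    using hK nab by blast
  ultimately show ?thesis unfolding separable_def
    apply (intro conjI[OF tr] exI[of _ "card K"] exI[of _ "c \<circ> h"] exI[of _ "a \<circ> h"] exI[of _ "b \<circ> h"])
    by simp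
qed

lemma trace_block:
  fixes M :: "real^('n::finite \<times> 'r::finite)^('n \<times> 'r)"
  assumes "\<And>i. block M i i = mat 1"
  shows "trace M = real CARD('r) * real CARD('n)"
proof -
  have "trace M = (\<Sum>i\<in>UNIV. \<Sum>a\<in>UNIV. block M i i $ a $ a)"
    unfolding trace_def sum_pair_univ block_def by simp
  also have "\<dots> = (\<Sum>i\<in>(UNIV::'n set). real CARD('r))" using assms by (simp add: mat_def)
  finally show ?thesis by simp
qed



lemma sign_self:
  fixes x :: "real^'n::finite"
  assumes "\<forall>i. x$i = 1 \<or> x$i = -1"
  shows "x \<bullet> x = real CARD('n)"
proof -
  have "x \<bullet> x = (\<Sum>i\<in>(UNIV::'n set). 1)"
    unfolding inner_vec_def inner_real_def by (rule sum.cong[OF refl]) (metis assms mult_1 mult_minus1 minus_minus)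
  then show ?thesis by simp
qed

lemma sign_norm:
  fixes x :: "real^'n::finite"
  assumes "\<forall>i. x$i = 1 \<or> x$i = -1"
  shows "norm ((1 / sqrt (real CARD('n))) *\<^sub>R x) = 1"
proof -
  have "norm x = sqrt (real CARD('n))" using sign_self[OF assms] by (simp add: norm_eq_sqrt_inner)
  then show ?thesis by simp
qed

lemma outer_scale: "outer (c *\<^sub>R x) = (c * c) *\<^sub>R outer x"
  by (simp add: vec_eq_iff outer_def)

lemma outer_zero: "outer 0 = 0"
  by (simp add: vec_eq_iff outer_def)

lemma dir1_part:
  fixes v :: "'n::finite \<Rightarrow> real^'r::finite"
  assumes G: "gram v \<in> cut_polytope"
  shows "(\<Sum>i\<in>UNIV. (norm (v i))^2) = real CARD('n) \<and>
     (\<exists>M \<in> (B_sep :: (real^('n \<times> 'r)^('n \<times> 'r)) set). stack v \<bullet> (M *v stack v) = (real CARD('n))^2)"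
proof -
  define N where "N = real CARD('n)"
  have Npos: "N > 0" by (simp add: N_def)
  obtain S u where fS: "finite S" and Ssub: "S \<subseteq> {outer x | x :: real^'n. \<forall>i. x$i = 1 \<or> x$i = -1}"
    and u0: "\<forall>P\<in>S. 0 \<le> u P" and u1: "sum u S = 1" and Gr: "(\<Sum>P\<in>S. u P *\<^sub>R P) = gram v"
    using G unfolding cut_polytope_def convex_hull_explicit by blast
  define \<sigma> where "\<sigma> P = (SOME x :: real^'n. (\<forall>i. x$i = 1 \<or> x$i = -1) \<and> P = outer x)" for P
  have \<sigma>: "\<And>P. P \<in> S \<Longrightarrow> (\<forall>i. \<sigma> P $ i = 1 \<or> \<sigma> P $ i = -1) \<and> P = outer (\<sigma> P)"
  proof -
    fix P assume "P \<in> S"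
    then obtain x :: "real^'n" where "(\<forall>i. x$i = 1 \<or> x$i = -1) \<and> P = outer x" using Ssub by blast
    then show "(\<forall>i. \<sigma> P $ i = 1 \<or> \<sigma> P $ i = -1) \<and> P = outer (\<sigma> P)"
      unfolding \<sigma>_def by (rule someI)
  qed
  have \<sigma>sq: "\<And>P i. P \<in> S \<Longrightarrow> \<sigma> P $ i * \<sigma> P $ i = 1"
    using \<sigma> by (metis mult_1 mult_minus1 minus_minus)
  have X: "\<And>i j. v i \<bullet> v j = (\<Sum>P\<in>S. u P * (\<sigma> P $ i * \<sigma> P $ j))"
  proof -
    fix i j
    have "v i \<bullet> v j = gram v $ i $ j" by (simp add: gram_def)
    also have "\<dots> = (\<Sum>P\<in>S. u P * P $ i $ j)" unfolding Gr[symmetric] by simp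
    also have "\<dots> = (\<Sum>P\<in>S. u P * (\<sigma> P $ i * \<sigma> P $ j))"
    proof (rule sum.cong[OF refl])
      fix P assume "P \<in> S"
      then have "P = outer (\<sigma> P)" using \<sigma> by blast
      moreover have "outer (\<sigma> P) $ i $ j = \<sigma> P $ i * \<sigma> P $ j" by (simp add: outer_def)
      ultimately show "u P * P $ i $ j = u P * (\<sigma> P $ i * \<sigma> P $ j)" by metis
    qed
    finally show "v i \<bullet> v j = (\<Sum>P\<in>S. u P * (\<sigma> P $ i * \<sigma> P $ j))" .
  qed
  have vv1: "\<And>i. v i \<bullet> v i = 1" using X \<sigma>sq u1 by simp
  have part1: "(\<Sum>i\<in>UNIV. (norm (v i))^2) = N" by (simp add: power2_norm_eq_inner vv1 N_def)
  define T where "T g = (\<Sum>j\<in>UNIV. (g $ j) *\<^sub>R v j)" for g :: "real^'n"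
  have linT: "linear T"
    by (rule linearI) (simp_all add: T_def scaleR_add_left sum.distrib scaleR_sum_right)
  have Tax: "\<And>j. T (axis j 1) = v j"
  proof -
    fix j :: 'n
    have "T (axis j 1) = (\<Sum>i\<in>UNIV. if i = j then v i else 0)"
      unfolding T_def by (rule sum.cong[OF refl]) (simp add: axis_def)
    then show "T (axis j 1) = v j" by simp
  qed
  have Tinner: "\<And>g h. T g \<bullet> T h = (\<Sum>P\<in>S. u P * ((\<sigma> P \<bullet> g) * (\<sigma> P \<bullet> h)))"
  proof -
    fix g h
    have "T g \<bullet> T h = (\<Sum>j\<in>UNIV. \<Sum>i\<in>UNIV. \<Sum>P\<in>S. u P * ((\<sigma> P $ i * g $ i) * (\<sigma> P $ j * h $ j)))"
      unfolding T_def inner_sum_left inner_sum_right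
      by (intro sum.cong refl) (simp add: X sum_distrib_left ac_simps)
    also have "\<dots> = (\<Sum>i\<in>UNIV. \<Sum>j\<in>UNIV. \<Sum>P\<in>S. u P * ((\<sigma> P $ i * g $ i) * (\<sigma> P $ j * h $ j)))"
      by (rule sum.swap)
    also have "\<dots> = (\<Sum>P\<in>S. \<Sum>i\<in>UNIV. \<Sum>j\<in>UNIV. u P * ((\<sigma> P $ i * g $ i) * (\<sigma> P $ j * h $ j)))"
      by (rule sum_swap3)
    also have "\<dots> = (\<Sum>P\<in>S. u P * ((\<sigma> P \<bullet> g) * (\<sigma> P \<bullet> h)))"
      by (rule sum.cong[OF refl]) (simp only: inner_vec_def inner_real_def, simp only: sum_product, simp only: sum_distrib_left)
    finally show "T g \<bullet> T h = (\<Sum>P\<in>S. u P * ((\<sigma> P \<bullet> g) * (\<sigma> P \<bullet> h)))" .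
  qed
  define p where "p P = (\<chi> j. sqrt (u P) * \<sigma> P $ j)" for P
  have pg: "\<And>P g. p P \<bullet> g = sqrt (u P) * (\<sigma> P \<bullet> g)"
    by (simp add: p_def inner_vec_def sum_distrib_left mult.assoc)
  have kerp: "\<And>P g. P \<in> S \<Longrightarrow> T g = 0 \<Longrightarrow> p P \<bullet> g = 0"
  proof -
    fix P g assume PS: "P \<in> S" and Tg: "T g = 0"
    have "(\<Sum>P\<in>S. u P * ((\<sigma> P \<bullet> g) * (\<sigma> P \<bullet> g))) = 0" using Tinner[of g g] Tg by simp
    then have "\<forall>P\<in>S. u P * ((\<sigma> P \<bullet> g) * (\<sigma> P \<bullet> g)) = 0"
      by (subst (asm) sum_nonneg_eq_0_iff) (auto simp: fS u0)
    then have "u P = 0 \<or> \<sigma> P \<bullet> g = 0" using PS by auto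
    then show "p P \<bullet> g = 0" by (auto simp: pg)
  qed
  have "\<forall>P\<in>S. \<exists>q\<in>range T. \<forall>g. T g \<bullet> q = p P \<bullet> g"
    using rep_exists[OF linT] kerp by blast
  then obtain Q where Q: "\<And>P. P \<in> S \<Longrightarrow> Q P \<in> range T \<and> (\<forall>g. T g \<bullet> Q P = p P \<bullet> g)"
    by metis
  have Qv: "\<And>P j. P \<in> S \<Longrightarrow> v j \<bullet> Q P = sqrt (u P) * \<sigma> P $ j"
    using Q Tax by (metis inner_axis inner_real_def mult_1_right p_def vec_lambda_beta)
  have QT: "\<And>P g. P \<in> S \<Longrightarrow> Q P \<bullet> T g = sqrt (u P) * (\<sigma> P \<bullet> g)"
    using Q pg by (metis inner_commute)
  have sub: "subspace (range T)" by (simp add: linT linear_subspace_image)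
  obtain B where Bsub: "B \<subseteq> (range T)\<^sup>\<bottom>" and Borth: "pairwise orthogonal B"
    and Bn: "\<And>e. e \<in> B \<Longrightarrow> norm e = 1" and Bind: "independent B" and Bspan: "span B = (range T)\<^sup>\<bottom>"
    using orthonormal_basis_subspace[OF subspace_orthogonal_comp, of "range T"] by metis
  have fB: "finite B" using Bind by (rule independent_imp_finite)
  have perp: "\<And>y z. y \<in> range T \<Longrightarrow> z \<in> (range T)\<^sup>\<bottom> \<Longrightarrow> y \<bullet> z = 0"
    by (auto simp: orthogonal_comp_def orthogonal_def)
  have decomp: "\<And>x. \<exists>g z. x = T g + z \<and> z \<in> (range T)\<^sup>\<bottom>"
    using subspace_sum_orthogonal_comp[OF sub] set_plus_elim by (metis UNIV_I rangeE)
  have res: "\<And>x. (\<Sum>P\<in>S. (Q P \<bullet> x) *\<^sub>R Q P) + (\<Sum>e\<in>B. (e \<bullet> x) *\<^sub>R e) = x"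
  proof -
    fix x
    obtain g z where xz: "x = T g + z" "z \<in> (range T)\<^sup>\<bottom>" using decomp by blast
    have s1: "(\<Sum>e\<in>B. (e \<bullet> x) *\<^sub>R e) = z"
    proof -
      have "(\<Sum>e\<in>B. (e \<bullet> x) *\<^sub>R e) = (\<Sum>e\<in>B. (e \<bullet> z) *\<^sub>R e)"
      proof (rule sum.cong[OF refl])
        fix e assume "e \<in> B"
        then have "T g \<bullet> e = 0" using perp Bsub by blast
        then show "(e \<bullet> x) *\<^sub>R e = (e \<bullet> z) *\<^sub>R e" by (simp add: xz(1) inner_add_right inner_commute)
      qed
      also have "\<dots> = z" using ortho_expand[OF fB Borth Bn, of z] xz(2) Bspan by simp
      finally show ?thesis .
    qed
    define L where "L = (\<Sum>P\<in>S. (Q P \<bullet> T g) *\<^sub>R Q P)"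
    have Qz: "\<And>P z. P \<in> S \<Longrightarrow> z \<in> (range T)\<^sup>\<bottom> \<Longrightarrow> Q P \<bullet> z = 0" using Q perp by blast
    have s2: "(\<Sum>P\<in>S. (Q P \<bullet> x) *\<^sub>R Q P) = L"
      unfolding L_def by (rule sum.cong[OF refl]) (simp add: xz(1) inner_add_right Qz[OF _ xz(2)])
    have Lw: "L \<bullet> w = T g \<bullet> w" for w
    proof -
      obtain h z' where wz: "w = T h + z'" "z' \<in> (range T)\<^sup>\<bottom>" using decomp by blast
      have "L \<bullet> w = (\<Sum>P\<in>S. (Q P \<bullet> T g) * (Q P \<bullet> w))" by (simp add: L_def inner_sum_left)
      also have "\<dots> = (\<Sum>P\<in>S. (Q P \<bullet> T g) * (Q P \<bullet> T h))"
        by (rule sum.cong[OF refl]) (simp add: wz(1) inner_add_right Qz[OF _ wz(2)])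
      also have "\<dots> = (\<Sum>P\<in>S. u P * ((\<sigma> P \<bullet> g) * (\<sigma> P \<bullet> h)))"
      proof (rule sum.cong[OF refl])
        fix P assume PS: "P \<in> S"
        have "sqrt (u P) * sqrt (u P) = u P" using u0 PS by simp
        then show "(Q P \<bullet> T g) * (Q P \<bullet> T h) = u P * ((\<sigma> P \<bullet> g) * (\<sigma> P \<bullet> h))"
          using QT[OF PS] by (metis mult.assoc mult.left_commute)
      qed
      also have "\<dots> = T g \<bullet> T h" by (rule Tinner[symmetric])
      also have "\<dots> = T g \<bullet> w" using perp[OF _ wz(2)] by (simp add: wz(1) inner_add_right)
      finally show ?thesis .
    qed
    have "L = T g"
    proof -
      have "(L - T g) \<bullet> (L - T g) = 0" using Lw[of "L - T g"] by (simp add: inner_diff_left)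
      then show ?thesis by simp
    qed
    then show "(\<Sum>P\<in>S. (Q P \<bullet> x) *\<^sub>R Q P) + (\<Sum>e\<in>B. (e \<bullet> x) *\<^sub>R e) = x"
      using s1 s2 xz(1) by simp
  qed
  have comp: "\<And>a b. (\<Sum>P\<in>S. Q P $ a * Q P $ b) + (\<Sum>e\<in>B. e $ a * e $ b) = (if a = b then 1 else 0)"
  proof -
    fix a b :: 'r
    have "((\<Sum>P\<in>S. (Q P \<bullet> axis b 1) *\<^sub>R Q P) + (\<Sum>e\<in>B. (e \<bullet> axis b 1) *\<^sub>R e)) $ a = axis b (1::real) $ a"
      by (subst res) (rule refl)
    then show "(\<Sum>P\<in>S. Q P $ a * Q P $ b) + (\<Sum>e\<in>B. e $ a * e $ b) = (if a = b then 1 else 0)"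
      by (simp only: vector_add_component sum_component vector_scaleR_component inner_axis inner_real_def mult_1_right)
         (simp add: axis_def mult.commute)
  qed
  define one where "one = ((\<chi> i. 1) :: real^'n)"
  define e0 where "e0 = (axis undefined 1 :: real^'r)"
  define dd where "dd = case_sum (\<lambda>P. N * (norm (Q P))^2) (\<lambda>e::real^'r. N)"
  define aa where "aa = case_sum (\<lambda>P. (1 / sqrt N) *\<^sub>R \<sigma> P) (\<lambda>e::real^'r. (1 / sqrt N) *\<^sub>R one)"
  define bb where "bb = case_sum (\<lambda>P. if Q P = 0 then e0 else (1 / norm (Q P)) *\<^sub>R Q P) (\<lambda>e::real^'r. e)"
  define K where "K = S <+> B"
  have fK: "finite K" using fS fB by (simp add: K_def)
  define M where "M = (\<Sum>k\<in>K. dd k *\<^sub>R outer (kron (aa k) (bb k)))"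
  have nab: "\<And>k. k \<in> K \<Longrightarrow> norm (aa k) = 1 \<and> norm (bb k) = 1 \<and> 0 \<le> dd k"
  proof -
    fix k assume "k \<in> K"
    then consider (L) P where "P \<in> S" "k = Inl P" | (R) e where "e \<in> B" "k = Inr e" by (auto simp: K_def)
    then show "norm (aa k) = 1 \<and> norm (bb k) = 1 \<and> 0 \<le> dd k"
    proof cases
      case L
      then show ?thesis using \<sigma>[OF L(1)] sign_norm[of "\<sigma> P"] Npos
        by (auto simp: aa_def bb_def dd_def N_def e0_def)
    next
      case R
      have "\<forall>i. one $ i = 1 \<or> one $ i = -1" by (simp add: one_def)
      then show ?thesis using sign_norm[of one] Bn[OF R(1)] Npos
        by (auto simp: aa_def bb_def dd_def N_def R(2))
    qed
  qed
  have blk: "\<And>i. block M i i = mat 1"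
  proof -
    fix i
    have "block M i i = (\<Sum>k\<in>K. (dd k * (aa k $ i * aa k $ i)) *\<^sub>R outer (bb k))"
      unfolding M_def by (rule block_outer_sum)
    also have "\<dots> = (\<Sum>P\<in>S. outer (Q P)) + (\<Sum>e\<in>B. outer e)"
    proof -
      have l: "(dd (Inl P) * (aa (Inl P) $ i * aa (Inl P) $ i)) *\<^sub>R outer (bb (Inl P)) = outer (Q P)" if PS: "P \<in> S" for P
      proof -
        have "dd (Inl P) * (aa (Inl P) $ i * aa (Inl P) $ i) = (norm (Q P))^2"
          using \<sigma>sq[OF PS, of i] Npos by (simp add: dd_def aa_def)
        then show ?thesis
          by (cases "Q P = 0") (simp_all add: bb_def outer_scale outer_zero power2_eq_square)
      qed
      have r: "(dd (Inr e) * (aa (Inr e) $ i * aa (Inr e) $ i)) *\<^sub>R outer (bb (Inr e)) = outer e" for e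
        using Npos by (simp add: dd_def aa_def bb_def one_def)
      show ?thesis
        unfolding K_def sum.Plus[OF fS fB] comp_def using l r by (simp cong: sum.cong)
    qed
    also have "\<dots> = mat 1"
      by (simp add: vec_eq_iff outer_def mat_def comp[symmetric])
    finally show "block M i i = mat 1" .
  qed
  have MB: "M \<in> B_set"
  proof -
    have "transpose M = M"
      by (simp add: vec_eq_iff transpose_def M_def outer_def mult.commute)
    moreover have "psd M"
      unfolding psd_def M_def quad_outer_sum using nab by (auto intro!: sum_nonneg)
    moreover have "\<forall>i j. block M i j = transpose (block M i j)"
      unfolding M_def block_outer_sum by (simp add: vec_eq_iff transpose_def outer_def mult.commute)
    ultimately show ?thesis using blk by (simp add: B_set_def)
  qed
  have sumdd: "sum dd K = real CARD('r) * N"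
  proof -
    have "trace M = sum dd K"
      unfolding M_def trace_outer_sum kron_self using nab by (simp add: norm_eq_1)
    then show ?thesis using trace_block[OF blk] by (simp add: N_def)
  qed
  have rN: "real CARD('r) * N > 0" using Npos by simp
  have sepM: "separable ((1 / (real CARD('r) * N)) *\<^sub>R M)"
  proof -
    have "(1 / (real CARD('r) * N)) *\<^sub>R M = (\<Sum>k\<in>K. (dd k / (real CARD('r) * N)) *\<^sub>R outer (kron (aa k) (bb k)))"
      by (simp add: M_def scaleR_sum_right)
    moreover have "separable (\<Sum>k\<in>K. (dd k / (real CARD('r) * N)) *\<^sub>R outer (kron (aa k) (bb k)))"
    proof (rule sep_family[OF fK])
      show "\<And>k. k \<in> K \<Longrightarrow> norm (aa k) = 1 \<and> norm (bb k) = 1 \<and> 0 \<le> dd k / (real CARD('r) * N)"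
        using nab rN by auto
      show "(\<Sum>k\<in>K. dd k / (real CARD('r) * N)) = 1"
        using sumdd rN Npos by (simp add: sum_divide_distrib[symmetric])
    qed
    ultimately show ?thesis by simp
  qed
  have Bv: "\<And>e i. e \<in> B \<Longrightarrow> e \<bullet> v i = 0"
    using perp Bsub Tax by (metis inner_commute rangeI subsetD)
  have termL: "\<And>P. P \<in> S \<Longrightarrow> dd (Inl P) * (\<Sum>i\<in>UNIV. aa (Inl P) $ i * (bb (Inl P) \<bullet> v i))^2 = N^2 * u P"
  proof -
    fix P assume PS: "P \<in> S"
    show "dd (Inl P) * (\<Sum>i\<in>UNIV. aa (Inl P) $ i * (bb (Inl P) \<bullet> v i))^2 = N^2 * u P"
    proof (cases "Q P = 0")
      case True
      have "sqrt (u P) * \<sigma> P $ undefined = 0" using Qv[OF PS, of undefined] True by simp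
      moreover have "\<sigma> P $ undefined \<noteq> 0" using \<sigma>[OF PS] by (metis zero_neq_one zero_neq_neg_one)
      ultimately have "sqrt (u P) = 0" by simp
      then have "u P = 0" by simp
      then show ?thesis using True by (simp add: dd_def)
    next
      case False
      let ?q = "norm (Q P)"
      have qpos: "?q > 0" using False by simp
      have "(\<Sum>i\<in>UNIV. aa (Inl P) $ i * (bb (Inl P) \<bullet> v i)) = (\<Sum>i\<in>(UNIV::'n set). sqrt (u P) / (sqrt N * ?q))"
      proof (rule sum.cong[OF refl])
        fix i
        have "bb (Inl P) \<bullet> v i = sqrt (u P) * \<sigma> P $ i / ?q"
          using False Qv[OF PS, of i] by (simp add: bb_def inner_commute)
        then show "aa (Inl P) $ i * (bb (Inl P) \<bullet> v i) = sqrt (u P) / (sqrt N * ?q)"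
          using \<sigma>sq[OF PS, of i] by (simp add: aa_def field_simps)
      qed
      also have "\<dots> = N * sqrt (u P) / (sqrt N * ?q)" by (simp add: N_def)
      finally have sv: "(\<Sum>i\<in>UNIV. aa (Inl P) $ i * (bb (Inl P) \<bullet> v i)) = N * sqrt (u P) / (sqrt N * ?q)" .
      have hN: "(sqrt N)^2 = N" using Npos by simp
      have hu: "(sqrt (u P))^2 = u P" using u0 PS by simp
      have "(N * sqrt (u P) / (sqrt N * ?q))^2 = N^2 * (sqrt (u P))^2 / ((sqrt N)^2 * ?q^2)"
        by (simp only: power_divide power_mult_distrib)
      also have "\<dots> = N^2 * u P / (N * ?q^2)" by (simp only: hN hu)
      also have "\<dots> = N * u P / ?q^2" using Npos by (simp add: power2_eq_square)
      finally have sq: "(N * sqrt (u P) / (sqrt N * ?q))^2 = N * u P / ?q^2" .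
      have "dd (Inl P) * (N * u P / ?q^2) = N^2 * u P"
        using qpos by (simp add: dd_def power2_eq_square)
      then show ?thesis by (simp only: sv sq)
    qed
  qed
  have VMV: "stack v \<bullet> (M *v stack v) = N^2"
  proof -
    have "stack v \<bullet> (M *v stack v) = (\<Sum>k\<in>K. dd k * (\<Sum>i\<in>UNIV. aa k $ i * (bb k \<bullet> v i))^2)"
      unfolding M_def quad_outer_sum kron_stack ..
    also have "\<dots> = (\<Sum>P\<in>S. N^2 * u P)"
      unfolding K_def sum.Plus[OF fS fB] comp_def using termL
      by (simp add: bb_def Bv)
    also have "\<dots> = N^2" using u1 by (simp add: sum_distrib_left[symmetric])
    finally show ?thesis .
  qed
  have "M \<in> (B_sep :: (real^('n \<times> 'r)^('n \<times> 'r)) set)"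
    using MB sepM unfolding B_sep_def N_def by simp
  then show ?thesis using part1 VMV unfolding N_def by blast
qed



lemma dir2:
  fixes v :: "'n::finite \<Rightarrow> real^'r::finite"
  assumes sumn: "(\<Sum>i\<in>UNIV. (norm (v i))^2) = real CARD('n)"
    and MB: "M \<in> (B_sep :: (real^('n \<times> 'r)^('n \<times> 'r)) set)"
    and MV: "stack v \<bullet> (M *v stack v) = (real CARD('n))^2"
  shows "gram v \<in> cut_polytope"
proof -
  define N where "N = real CARD('n)"
  have Npos: "N > 0" unfolding N_def by simp
  have rpos: "real CARD('r) > 0" by simp
  have MBs: "M \<in> B_set" and sep: "separable ((1 / (real CARD('r) * N)) *\<^sub>R M)"
    using MB unfolding B_sep_def N_def by auto
  have diag: "\<And>i. block M i i = mat 1" using MBs unfolding B_set_def by auto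
  obtain m :: nat and c a b where cabr: "(\<forall>k<m. norm (a k) = 1 \<and> norm (b k) = 1 \<and> 0 \<le> c k) \<and> sum c {..<m} = 1 \<and>
       (1 / (real CARD('r) * N)) *\<^sub>R M = (\<Sum>k<m. c k *\<^sub>R outer (kron (a k :: real^'n) (b k :: real^'r)))"
    using sep unfolding separable_def by blast
  have cab: "\<forall>k<m. norm (a k) = 1 \<and> norm (b k) = 1 \<and> 0 \<le> c k"
    and rho: "(1 / (real CARD('r) * N)) *\<^sub>R M = (\<Sum>k<m. c k *\<^sub>R outer (kron (a k) (b k)))"
    using cabr by auto
  define d where "d k = real CARD('r) * N * c k" for k
  have d0: "\<And>k. k < m \<Longrightarrow> d k \<ge> 0" using cab Npos unfolding d_def by simp
  have Mrep: "M = (\<Sum>k<m. d k *\<^sub>R outer (kron (a k) (b k)))"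
  proof -
    have "M = (real CARD('r) * N) *\<^sub>R ((1 / (real CARD('r) * N)) *\<^sub>R M)"
      using Npos rpos by simp
    also have "\<dots> = (\<Sum>k<m. d k *\<^sub>R outer (kron (a k) (b k)))"
      unfolding rho scaleR_sum_right d_def by simp
    finally show ?thesis .
  qed
  define x where "x k i = b k \<bullet> v i" for k i
  define y where "y k i = a k $ i * x k i" for k i
  define g where "g k = (\<Sum>i\<in>UNIV. y k i)" for k
  define t where "t k = g k / N" for k
  have Q: "\<And>i u w. (\<Sum>k<m. d k * ((a k $ i)^2 * ((b k \<bullet> u) * (b k \<bullet> w)))) = u \<bullet> w"
    by (rule diag_form[OF diag Mrep])
  have V: "(\<Sum>k<m. d k * (g k)^2) = N^2"
    using MV unfolding Mrep quad_outer_sum kron_stack g_def y_def x_def N_def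
    by (simp add: inner_commute)
  have Y: "(\<Sum>k<m. d k * (\<Sum>i\<in>UNIV. (y k i)^2)) = N"
  proof -
    have "N = (\<Sum>i\<in>UNIV. v i \<bullet> v i)" using sumn unfolding N_def by (simp add: power2_norm_eq_inner)
    also have "\<dots> = (\<Sum>i\<in>UNIV. \<Sum>k<m. d k * (y k i)^2)"
      by (rule sum.cong[OF refl], subst Q[symmetric]) (simp add: y_def x_def power2_eq_square mult_ac)
    also have "\<dots> = (\<Sum>k<m. d k * (\<Sum>i\<in>UNIV. (y k i)^2))"
      by (subst sum.swap) (simp add: sum_distrib_left)
    finally show ?thesis by simp
  qed
  have Zk: "\<And>k. d k * (\<Sum>i\<in>UNIV. (y k i - t k)^2) = d k * (\<Sum>i\<in>UNIV. (y k i)^2) - d k * (g k)^2 / N"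
  proof -
    fix k
    have "(\<Sum>i\<in>UNIV. (y k i - t k)^2) = (\<Sum>i\<in>UNIV. (y k i)^2) - 2 * t k * g k + N * (t k)^2"
      by (simp add: power2_diff sum.distrib sum_subtractf g_def sum_distrib_left N_def mult_ac)
    also have "\<dots> = (\<Sum>i\<in>UNIV. (y k i)^2) - (g k)^2 / N"
      using Npos by (simp add: t_def field_simps power2_eq_square)
    finally show "d k * (\<Sum>i\<in>UNIV. (y k i - t k)^2) = d k * (\<Sum>i\<in>UNIV. (y k i)^2) - d k * (g k)^2 / N"
      by (simp add: right_diff_distrib)
  qed
  have Z: "(\<Sum>k<m. d k * (\<Sum>i\<in>UNIV. (y k i - t k)^2)) = 0"
    unfolding Zk sum_subtractf Y
    using V Npos by (simp add: sum_divide_distrib[symmetric] power2_eq_square)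
  have H: "\<And>k i. k < m \<Longrightarrow> d k * (y k i - t k) = 0"
  proof -
    fix k i assume km: "k < m"
    have "\<forall>k\<in>{..<m}. d k * (\<Sum>i\<in>UNIV. (y k i - t k)^2) = 0"
      using Z by (subst sum_nonneg_eq_0_iff[symmetric]) (auto intro!: mult_nonneg_nonneg sum_nonneg d0)
    then have "d k = 0 \<or> (\<Sum>i\<in>UNIV. (y k i - t k)^2) = 0" using km by auto
    then have "d k = 0 \<or> (\<forall>i\<in>UNIV. (y k i - t k)^2 = 0)"
      by (subst (asm) sum_nonneg_eq_0_iff) auto
    then show "d k * (y k i - t k) = 0" by auto
  qed
  have T1: "(\<Sum>k<m. d k * (t k)^2) = 1"
  proof -
    have "(\<Sum>k<m. d k * (t k)^2) = (\<Sum>k<m. d k * (g k)^2) / N^2"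
      by (simp add: t_def sum_divide_distrib power_divide)
    then show ?thesis using V Npos by simp
  qed
  have dy: "\<And>k i. k < m \<Longrightarrow> d k * y k i = d k * t k"
    using H by (simp add: algebra_simps)
  have dyy: "\<And>k i j. k < m \<Longrightarrow> d k * (y k i * y k j) = d k * (t k)^2"
  proof -
    fix k i j assume km: "k < m"
    have "d k * (y k i * y k j) = (d k * y k i) * y k j" by (simp only: mult.assoc)
    also have "\<dots> = (d k * t k) * y k j" using dy[OF km, of i] by simp
    also have "\<dots> = t k * (d k * y k j)" by (simp add: ac_simps)
    also have "\<dots> = t k * (d k * t k)" using dy[OF km, of j] by simp
    also have "\<dots> = d k * (t k)^2" by (simp add: power2_eq_square ac_simps)
    finally show "d k * (y k i * y k j) = d k * (t k)^2" .
  qed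
  have norm1: "\<And>i. v i \<bullet> v i = 1"
  proof -
    fix i
    have "v i \<bullet> v i = (\<Sum>k<m. d k * (y k i * y k i))"
      by (subst Q[symmetric]) (simp add: y_def x_def power2_eq_square mult_ac)
    also have "\<dots> = (\<Sum>k<m. d k * (t k)^2)"
      by (rule sum.cong[OF refl]) (simp add: dyy)
    finally show "v i \<bullet> v i = 1" using T1 by simp
  qed
  have PQ: "\<And>k i j. k < m \<Longrightarrow> d k * (a k $ i * x k j - a k $ j * x k i) = 0"
  proof -
    fix i j
    define p where "p k = a k $ i * x k j" for k
    define q where "q k = a k $ j * x k i" for k
    have s1: "(\<Sum>k<m. d k * (p k)^2) = 1"
      using Q[of i "v j" "v j"] norm1[of j] by (simp add: p_def x_def power2_eq_square mult_ac)
    have s2: "(\<Sum>k<m. d k * (q k)^2) = 1"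
      using Q[of j "v i" "v i"] norm1[of i] by (simp add: q_def x_def power2_eq_square mult_ac)
    have s3: "(\<Sum>k<m. d k * (p k * q k)) = 1"
    proof -
      have "(\<Sum>k<m. d k * (p k * q k)) = (\<Sum>k<m. d k * (y k i * y k j))"
        by (simp add: p_def q_def y_def mult_ac)
      also have "\<dots> = (\<Sum>k<m. d k * (t k)^2)"
        by (rule sum.cong[OF refl]) (simp add: dyy)
      finally show ?thesis using T1 by simp
    qed
    have "(\<Sum>k<m. d k * (p k - q k)^2) = (\<Sum>k<m. d k * (p k)^2 + d k * (q k)^2 - 2 * (d k * (p k * q k)))"
      by (rule sum.cong[OF refl]) (simp add: power2_diff algebra_simps)
    also have "\<dots> = (\<Sum>k<m. d k * (p k)^2) + (\<Sum>k<m. d k * (q k)^2) - 2 * (\<Sum>k<m. d k * (p k * q k))"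
      by (simp only: sum_subtractf sum.distrib sum_distrib_left[symmetric])
    finally have "(\<Sum>k<m. d k * (p k - q k)^2) = 0" using s1 s2 s3 by simp
    then have "\<forall>k\<in>{..<m}. d k * (p k - q k)^2 = 0"
      by (subst sum_nonneg_eq_0_iff[symmetric]) (auto intro!: mult_nonneg_nonneg d0)
    then show "\<And>k. k < m \<Longrightarrow> d k * (a k $ i * x k j - a k $ j * x k i) = 0"
      by (auto simp: p_def q_def)
  qed
  define s where "s k = ((\<chi> i. if x k i \<ge> 0 then 1 else -1) :: real^'n)" for k
  define w where "w k = d k * (t k)^2" for k
  have key: "\<And>k i j. k < m \<Longrightarrow> d k * t k * (a k $ i * x k j) = w k * (s k $ i * s k $ j)"
  proof -
    fix k i j assume km: "k < m"
    show "d k * t k * (a k $ i * x k j) = w k * (s k $ i * s k $ j)"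
      unfolding w_def s_def vec_lambda_beta
      by (rule sign_arith[OF d0[OF km] H[OF km, unfolded y_def] H[OF km, unfolded y_def] PQ[OF km]])
  qed
  have G: "gram v = (\<Sum>k<m. w k *\<^sub>R outer (s k))"
  proof -
    have "gram v $ i $ j = (\<Sum>k<m. w k * (s k $ i * s k $ j))" for i j
    proof -
      have "gram v $ i $ j = v i \<bullet> v j" by (simp add: gram_def)
      also have "\<dots> = (\<Sum>k<m. (d k * y k i) * (a k $ i * x k j))"
        by (subst Q[of i "v i" "v j", symmetric]) (simp add: y_def x_def power2_eq_square mult_ac)
      also have "\<dots> = (\<Sum>k<m. d k * t k * (a k $ i * x k j))"
        by (rule sum.cong[OF refl]) (simp add: dy)
      also have "\<dots> = (\<Sum>k<m. w k * (s k $ i * s k $ j))"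
        by (rule sum.cong[OF refl]) (simp add: key)
      finally show ?thesis .
    qed
    then show ?thesis by (simp add: vec_eq_iff outer_def)
  qed
  show ?thesis
    unfolding G cut_polytope_def
  proof (rule convex_sum)
    show "(\<Sum>k<m. w k) = 1" using T1 by (simp add: w_def)
    show "\<And>k. k \<in> {..<m} \<Longrightarrow> 0 \<le> w k" using d0 by (simp add: w_def)
    show "\<And>k. k \<in> {..<m} \<Longrightarrow> outer (s k) \<in> convex hull {outer x |x. \<forall>i. x $ i = 1 \<or> x $ i = - 1}"
      by (rule hull_inc) (rule CollectI, rule exI[of _ "s k" for k], simp add: s_def)
  qed auto
qed


theorem proposition10:
  fixes v :: "'n::finite \<Rightarrow> real^'r::finite"
  shows "gram v \<in> cut_polytope \<longleftrightarrow>
    ((\<Sum>i\<in>UNIV. (norm (v i))^2) = real CARD('n) \<and>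
     (\<exists>M \<in> (B_sep :: (real^('n \<times> 'r)^('n \<times> 'r)) set).
        stack v \<bullet> (M *v stack v) = (real CARD('n))^2))"
proof
  assume "gram v \<in> cut_polytope"
  then show "(\<Sum>i\<in>UNIV. (norm (v i))^2) = real CARD('n) \<and>
     (\<exists>M \<in> (B_sep :: (real^('n \<times> 'r)^('n \<times> 'r)) set).
        stack v \<bullet> (M *v stack v) = (real CARD('n))^2)"
    by (rule dir1_part)
next
  assume "(\<Sum>i\<in>UNIV. (norm (v i))^2) = real CARD('n) \<and>
     (\<exists>M \<in> (B_sep :: (real^('n \<times> 'r)^('n \<times> 'r)) set).
        stack v \<bullet> (M *v stack v) = (real CARD('n))^2)"
  then show "gram v \<in> cut_polytope" using dir2 by blast
qed

end
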